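(* Let $\gamma$ be a Jordan curve in $\mathbb{R}^2$ and let $\gamma[a,b]$ (with $a\neq b$ points of $\gamma$) be contained in an open disk $D$ of radius $1$. Suppose there is an open disk $D_r$ of radius $r\le 1$ such that $\gamma[a,b]\cap\overline{D_r}=\{a,b\}$ and $\gamma$ winds positively around $D_r$ from $a$ to $b$. Then $\gamma$ does not have bounded convex curvature.
   Context: For a Jordan curve $\gamma$, $\operatorname{Int}\gamma$ and $\operatorname{Ext}\gamma$ are the bounded and unbounded components of $\mathbb{R}^2\setminus\gamma$. A parametrization of $\gamma$ is positively oriented if its argument variation (total change of a continuous argument of $\varphi(t)-q$) around every $q\in\operatorname{Int}\gamma$ equals $2\pi$; for circles this is the counterclockwise orientation. For distinct $a,b\in\gamma$, $\gamma[a,b]$ denotes the closed subarc of $\gamma$ traversed from $a$ to $b$ along the positive orientation (applied also to circles $\partial D$), and $\gamma(a,b)=\gamma[a,b]\setminus\{a,b\}$. If $a,b\in\gamma$ are distinct and $D'$ is an open disk with $a,b\in\partial D'$ and $\gamma[a,b]\cap\overline{D'}=\{a,b\}$, let $R$ be the open region bounded by the Jordan curve $\gamma[a,b]\cup\partial D'[a,b]$; then either $D'\subset R$ or $D'\cap R=\emptyset$, and in the latter case $\gamma$ is said to wind positively around $D'$ from $a$ to $b$. $B(x,\varepsilon)$ is the open disk of center $x$ and radius $\varepsilon$. A Jordan curve $\gamma$ has bounded convex curvature if for every $x\in\gamma$ there exist an open disk $U_x$ of radius $1$ and $\varepsilon_x>0$ with $x\in\partial U_x$ and $B(x,\varepsilon_x)\cap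 U_x\subset\operatorname{Int}\gamma$. *)

theory Defs
  imports "HOL-Complex_Analysis.Complex_Analysis"
begin

text \<open>The plane R^2 is modelled by the complex numbers.\<close>

definition jordan_curve :: "complex set \<Rightarrow> bool" where
  "jordan_curve C \<longleftrightarrow> (\<exists>g. simple_path g \<and> pathfinish g = pathstart g \<and> path_image g = C)"

text \<open>Int of a Jordan curve: the bounded component of the complement (library: inside).
  Positively oriented parametrization: winding number (argument variation / 2 pi) 1
  around every interior point.\<close>

definition pos_param :: "complex set \<Rightarrow> (real \<Rightarrow> complex) \<Rightarrow> bool" where
  "pos_param C g \<longleftrightarrow> simple_path g \<and> pathfinish g = pathstart g \<and> path_image g = C \<and>
     (\<forall>q\<in>inside C. winding_number g q = 1)"

text \<open>The closed subarc C[a,b] traversed from a to b along the positive orientation.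
  (Well defined for distinct a, b on a Jordan curve, independent of the chosen
  positively oriented parametrization starting at a.)\<close>

definition pos_arc :: "complex set \<Rightarrow> complex \<Rightarrow> complex \<Rightarrow> complex set" where
  "pos_arc C a b = (SOME A. \<exists>g t. pos_param C g \<and> g 0 = a \<and> 0 < t \<and> t < 1 \<and> g t = b \<and>
                                  A = g ` {0..t})"

definition winds_positively ::
  "complex set \<Rightarrow> complex \<Rightarrow> real \<Rightarrow> complex \<Rightarrow> complex \<Rightarrow> bool" where
  "winds_positively C c r a b \<longleftrightarrow>
     a \<in> sphere c r \<and> b \<in> sphere c r \<and>
     pos_arc C a b \<inter> cball c r = {a, b} \<and>
     ball c r \<inter> inside (pos_arc C a b \<union> pos_arc (sphere c r) a b) = {}"

definition bounded_convex_curvature :: "complex set \<Rightarrow> bool" where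
  "bounded_convex_curvature C \<longleftrightarrow>
     (\<forall>x\<in>C. \<exists>u \<epsilon>. x \<in> sphere u 1 \<and> \<epsilon> > 0 \<and> ball x \<epsilon> \<inter> ball u 1 \<subseteq> inside C)"

end

theory Submission
  imports Defs
begin

lemma simple_path_inj:
  assumes "simple_path g" "x \<in> {0..1}" "y \<in> {0..1}" "g x = g y" "x \<noteq> y"
  shows "{x,y} = {0,1}"
  using assms unfolding simple_path_def loop_free_def by blast

lemma pos_param_exists:
  assumes "jordan_curve C" "a \<in> C" "b \<in> C" "a \<noteq> b"
  shows "\<exists>g t. pos_param C g \<and> g 0 = a \<and> 0 < t \<and> t < 1 \<and> g t = b"
proof -
  obtain g0 where g0: "simple_path g0" "pathfinish g0 = pathstart g0" "path_image g0 = C"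
    using assms(1) unfolding jordan_curve_def by blast
  obtain \<tau> where \<tau>: "\<tau> \<in> {0..1}" "g0 \<tau> = a"
    using assms(2) g0(3) unfolding path_image_def by auto
  define g1 where "g1 = shiftpath \<tau> g0"
  have g1: "simple_path g1" "pathfinish g1 = pathstart g1" "path_image g1 = C" "g1 0 = a"
  proof -
    show "simple_path g1" using g0 \<tau> unfolding g1_def by (auto simp: simple_path_shiftpath)
    show "pathfinish g1 = pathstart g1" using g0 \<tau> unfolding g1_def by (auto simp: closed_shiftpath)
    show "path_image g1 = C" using g0 \<tau> unfolding g1_def by (auto simp: path_image_shiftpath)
    show "g1 0 = a" using \<tau> unfolding g1_def by (auto simp: shiftpath_def)
  qed
  have w1: "winding_number g1 z = winding_number g0 z" if "z \<notin> C" for z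
    unfolding g1_def using winding_number_shiftpath[of g0 z \<tau>] g0 \<tau> that simple_path_imp_path by auto
  have "\<exists>g. simple_path g \<and> pathfinish g = pathstart g \<and> path_image g = C \<and> g 0 = a
          \<and> (\<forall>q\<in>inside C. winding_number g q = 1)"
  proof (rule simple_closed_path_winding_number_inside[OF g1(1)])
    assume "\<And>z. z \<in> inside (path_image g1) \<Longrightarrow> winding_number g1 z = 1"
    then show ?thesis using g1 by blast
  next
    assume H: "\<And>z. z \<in> inside (path_image g1) \<Longrightarrow> winding_number g1 z = -1"
    show ?thesis
    proof (intro exI conjI ballI)
      show "simple_path (reversepath g1)" by (simp add: g1(1) simple_path_reversepath)
      show "pathfinish (reversepath g1) = pathstart (reversepath g1)" using g1(2) by simp
      show "path_image (reversepath g1) = C" using g1(3) by simp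
      show "reversepath g1 0 = a" using g1(2,4) by (simp add: reversepath_def pathfinish_def pathstart_def)
      fix q assume q: "q \<in> inside C"
      then have "q \<notin> C" using inside_no_overlap by blast
      then show "winding_number (reversepath g1) q = 1"
        using winding_number_reversepath[of g1 q] H[of q] q g1 simple_path_imp_path by auto
    qed
  qed
  then obtain g where g: "simple_path g" "pathfinish g = pathstart g" "path_image g = C" "g 0 = a"
          "\<forall>q\<in>inside C. winding_number g q = 1" by blast
  obtain t where t: "t \<in> {0..1}" "g t = b"
    using assms(3) g(3) unfolding path_image_def by auto
  have "t \<noteq> 0" using t g(4) assms(4) by auto
  moreover have "t \<noteq> 1" using t g(2,4) assms(4) by (auto simp: pathfinish_def pathstart_def)
  ultimately show ?thesis using g t unfolding pos_param_def by (intro exI[of _ g] exI[of _ t]) auto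
qed

lemma pos_arc_props:
  assumes "jordan_curve C" "a \<in> C" "b \<in> C" "a \<noteq> b"
  shows "\<exists>g t. pos_param C g \<and> g 0 = a \<and> 0 < t \<and> t < 1 \<and> g t = b \<and> pos_arc C a b = g ` {0..t}"
proof -
  let ?P = "\<lambda>A. \<exists>g t. pos_param C g \<and> g 0 = a \<and> 0 < t \<and> t < 1 \<and> g t = b \<and> A = g ` {0..t}"
  have "\<exists>A. ?P A" using pos_param_exists[OF assms] by blast
  then have "?P (SOME A. ?P A)" by (rule someI_ex)
  then show ?thesis unfolding pos_arc_def by blast
qed

lemma jordan_sphere: "0 < r \<Longrightarrow> jordan_curve (sphere c r)"
  unfolding jordan_curve_def
  by (intro exI[of _ "circlepath c r"]) (auto simp: simple_path_circlepath)

lemma inside_sphere_eq: "0 < r \<Longrightarrow> inside (sphere (c::complex) r) = ball c r"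
  by (metis bounded_cball convex_cball frontier_cball inside_frontier_eq_interior interior_cball)

lemma norm_sq_expand: "(norm (d + t *\<^sub>R w :: complex))\<^sup>2 = (norm d)\<^sup>2 + 2*t*(d \<bullet> w) + t\<^sup>2 * (norm w)\<^sup>2"
  by (simp only: power2_norm_eq_inner) (simp add: inner_add_left inner_add_right inner_commute algebra_simps power2_eq_square)

lemma norm_sq_expand2: "(norm (d + a *\<^sub>R e + t *\<^sub>R w :: complex))\<^sup>2 =
   (norm d)\<^sup>2 + 2*a*(d \<bullet> e) + 2*t*(d \<bullet> w) + a\<^sup>2 * (norm e)\<^sup>2 + 2*a*t*(e \<bullet> w) + t\<^sup>2 * (norm w)\<^sup>2"
  by (simp only: power2_norm_eq_inner) (simp add: inner_add_left inner_add_right inner_commute algebra_simps power2_eq_square)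

lemma ii_orth: "(e::complex) \<bullet> (\<i> * e) = 0"
  by (simp add: inner_complex_def algebra_simps)

lemma tangent_escape:
  fixes y c p :: complex
  assumes "norm (y - c) = r" "0 < r" "0 < \<delta>"
  shows "\<exists>z. norm (z - y) < \<delta> \<and> r < norm (z - c) \<and> norm (y - p) < norm (z - p)"
proof -
  define w where "w = \<i> * (y - c)"
  have nw: "norm w = r" using assms by (simp add: w_def norm_mult)
  have ow: "(y - c) \<bullet> w = 0" unfolding w_def by (rule ii_orth)
  define s where "s = \<delta> / (2*r)"
  have s: "0 < s" "s * r < \<delta>" using assms by (auto simp: s_def field_simps)
  define t where "t = (if 0 \<le> (y - p) \<bullet> w then s else -s)"
  have t: "0 \<le> t * ((y - p) \<bullet> w)" "\<bar>t\<bar> = s" using s by (auto simp: t_def mult_le_0_iff)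
  define z where "z = y + t *\<^sub>R w"
  have "norm (z - y) = s * r" by (simp add: z_def nw t)
  moreover
  have "(norm (z - c))\<^sup>2 = r\<^sup>2 + t\<^sup>2 * r\<^sup>2"
    using norm_sq_expand[of "y - c" t w] ow nw assms(1) by (simp add: z_def algebra_simps)
  moreover have "t \<noteq> 0" using t s by auto
  moreover have "0 < t\<^sup>2 * r\<^sup>2" using \<open>t \<noteq> 0\<close> assms by simp
  ultimately have "r\<^sup>2 < (norm (z - c))\<^sup>2" by simp
  then have "r < norm (z - c)" by (simp add: power2_less_imp_less)
  moreover
  have "(norm (z - p))\<^sup>2 = (norm (y - p))\<^sup>2 + 2*t*((y - p) \<bullet> w) + t\<^sup>2 * r\<^sup>2"
    using norm_sq_expand[of "y - p" t w] nw by (simp add: z_def algebra_simps)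
  moreover have "t \<noteq> 0" using t s by auto
  moreover have "0 < t\<^sup>2 * r\<^sup>2" using \<open>t \<noteq> 0\<close> assms by simp
  ultimately have "(norm (y - p))\<^sup>2 < (norm (z - p))\<^sup>2" using t(1) by simp
  then have "norm (y - p) < norm (z - p)" by (simp add: power2_less_imp_less)
  with \<open>norm (z - y) = s * r\<close> \<open>r < norm (z - c)\<close> show ?thesis using s by (intro exI[of _ z]) auto
qed

lemma unit_disk_escape:
  fixes x u p :: complex
  assumes "norm (x - u) = 1" "norm (x - p) = \<rho>" "\<rho> < 1" "0 < \<delta>"
  shows "\<exists>z. norm (z - x) < \<delta> \<and> norm (z - u) < 1 \<and> \<rho> < norm (z - p)"
proof -
  define e where "e = u - x"
  define w where "w = \<i> * e"
  have ne: "norm e = 1" using assms by (simp add: e_def norm_minus_commute)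
  have nw: "norm w = 1" using ne by (simp add: w_def norm_mult)
  have ow: "e \<bullet> w = 0" unfolding w_def by (rule ii_orth)
  have r0: "0 \<le> \<rho>" using assms(2) by auto
  define s where "s = min (1/2) (\<delta>\<^sup>2 / (2*(1+\<rho>)))"
  have s1: "0 < s" "s < 1" using assms r0 by (auto simp: s_def)
  have "s \<le> \<delta>\<^sup>2 / (2*(1+\<rho>))" by (simp add: s_def)
  then have "s*(1+\<rho>) \<le> \<delta>\<^sup>2 / 2" using r0 by (simp add: field_simps)
  moreover have "0 < s*(1+\<rho>)" using s1 r0 by simp
  ultimately have s: "0 < s" "s < 1" "s*(1+\<rho>) < \<delta>\<^sup>2" using s1 assms(4) by auto
  define k where "k = s*(1+\<rho>) - s\<^sup>2"
  have "s * s \<le> s * (1 + \<rho>)" using s r0 by (intro mult_left_mono) auto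
  then have k: "0 \<le> k" by (simp add: k_def power2_eq_square)
  define n where "n = x - p"
  define t where "t = (if 0 \<le> n \<bullet> w then sqrt k else - sqrt k)"
  have t: "0 \<le> t * (n \<bullet> w)" "t\<^sup>2 = k"
    using k by (auto simp: t_def mult_le_0_iff)
  have ce: "- \<rho> \<le> n \<bullet> e"
  proof -
    have "\<bar>n \<bullet> e\<bar> \<le> norm n * norm e" by (rule Cauchy_Schwarz_ineq2)
    then show ?thesis using ne assms(2) by (auto simp: n_def)
  qed
  define z where "z = x + s *\<^sub>R e + t *\<^sub>R w"
  have "(norm (z - x))\<^sup>2 = s\<^sup>2 + k"
    using norm_sq_expand2[of 0 s e t w] ne nw ow t by (simp add: z_def)
  then have "(norm (z - x))\<^sup>2 < \<delta>\<^sup>2" using s by (simp add: k_def)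
  then have z1: "norm (z - x) < \<delta>" using assms(4) by (simp add: power2_less_imp_less less_imp_le)
  have "z - u = (-e) + s *\<^sub>R e + t *\<^sub>R w" by (simp add: z_def e_def)
  then have "(norm (z - u))\<^sup>2 = 1 - 2* s + s\<^sup>2 + k"
    using norm_sq_expand2[of "-e" s e t w] ne nw ow t by (simp add: inner_commute power2_norm_eq_inner[symmetric])
  then have "(norm (z - u))\<^sup>2 = 1 - s + \<rho> * s" by (simp add: k_def algebra_simps)
  moreover have "\<rho> * s < s" using s assms(3) by simp
  ultimately have "(norm (z - u))\<^sup>2 < 1\<^sup>2" by simp
  then have z2: "norm (z - u) < 1" by (simp add: power2_less_imp_less)
  have zp: "z - p = n + s *\<^sub>R e + t *\<^sub>R w" by (simp add: z_def n_def)
  have nn: "norm n = \<rho>" using assms(2) by (simp add: n_def)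
  have "(norm (n + s *\<^sub>R e + t *\<^sub>R w))\<^sup>2 = \<rho>\<^sup>2 + 2 * s*(n \<bullet> e) + 2*t*(n \<bullet> w) + s\<^sup>2 + k"
    using norm_sq_expand2[of n s e t w] ne nw ow t nn by simp
  then have "(norm (z - p))\<^sup>2 = \<rho>\<^sup>2 + 2 * s*(n \<bullet> e) + 2*t*(n \<bullet> w) + s\<^sup>2 + k"
    using zp by simp
  then have e1: "(norm (z - p))\<^sup>2 = \<rho>\<^sup>2 + (s + \<rho> * s) + 2 * (s * (n \<bullet> e)) + 2 * (t * (n \<bullet> w))"
    by (simp add: k_def algebra_simps)
  have "s * (n \<bullet> e) \<ge> - (\<rho> * s)" using mult_left_mono[OF ce, of s] s by (simp add: mult.commute)
  moreover have "\<rho> * s < s" using s assms(3) by simp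
  ultimately have "\<rho>\<^sup>2 < (norm (z - p))\<^sup>2" using e1 t(1) by linarith
  then have z3: "\<rho> < norm (z - p)" by (simp add: power2_less_imp_less)
  show ?thesis using z1 z2 z3 by blast
qed

lemma push_away:
  fixes x p :: complex
  assumes "0 < e"
  shows "\<exists>z. norm (z - x) < e \<and> norm (x - p) < norm (z - p)"
proof (cases "x = p")
  case True
  then show ?thesis using assms by (intro exI[of _ "x + of_real (e/2)"]) (auto simp: norm_of_real)
next
  case False
  define v where "v = (x - p) / of_real (norm (x - p))"
  have nv: "norm v = 1" using False by (simp add: v_def norm_divide)
  define z where "z = x + of_real (e/2) * v"
  have "z - p = (x - p) * of_real (1 + (e/2) / norm (x - p))"
    using False by (simp add: z_def v_def field_simps)
  then have "norm (z - p) = norm (x - p) * \<bar>1 + (e/2) / norm (x - p)\<bar>"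
    by (simp only: norm_mult norm_of_real)
  also have "\<dots> = norm (x - p) + e/2"
    using False assms by (simp add: field_simps)
  finally have "norm (z - p) = norm (x - p) + e/2" .
  moreover have "norm (z - x) = e/2" using assms nv by (simp add: z_def norm_mult)
  ultimately show ?thesis using assms by (intro exI[of _ z]) auto
qed

lemma main_contra:
  fixes g h :: "real \<Rightarrow> complex" and a b c0 c :: complex and r t0 s0 :: real
  assumes g: "simple_path g" "pathfinish g = pathstart g" "path_image g = C"
     and gw: "\<forall>q\<in>inside C. winding_number g q = 1"
     and ga: "g 0 = a" and t0: "0 < t0" "t0 < 1" and gb: "g t0 = b"
     and h: "simple_path h" "pathfinish h = pathstart h" "path_image h = sphere c r"
     and hw: "\<forall>q\<in>ball c r. winding_number h q = 1"
     and ha: "h 0 = a" and s0: "0 < s0" "s0 < 1" and hb: "h s0 = b"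
     and ab: "a \<noteq> b"
     and Gsub: "g ` {0..t0} \<subseteq> ball c0 1"
     and r: "0 < r" "r \<le> 1"
     and Gcap: "g ` {0..t0} \<inter> cball c r = {a, b}"
     and wp: "ball c r \<inter> inside (g ` {0..t0} \<union> h ` {0..s0}) = {}"
     and bcc: "bounded_convex_curvature C"
  shows False
proof -
  define G where "G = g ` {0..t0}"
  define A where "A = h ` {0..s0}"
  define G2 where "G2 = g ` {t0..1}"
  define A2 where "A2 = h ` {s0..1}"
  define g1 where "g1 = subpath 0 t0 g"
  define g2 where "g2 = subpath t0 1 g"
  define h1 where "h1 = subpath 0 s0 h"
  define h2 where "h2 = subpath s0 1 h"
  have pg: "path g" and ph: "path h" using g h simple_path_imp_path by auto
  have g10: "g 1 = a" using g(2) ga by (simp add: pathfinish_def pathstart_def)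
  have h10: "h 1 = a" using h(2) ha by (simp add: pathfinish_def pathstart_def)
  have t0i: "t0 \<in> {0..1}" and s0i: "s0 \<in> {0..1}" using t0 s0 by auto
  have pg1: "path g1" and pg2: "path g2" and ph1: "path h1" and ph2: "path h2"
    using pg ph t0i s0i by (auto simp: g1_def g2_def h1_def h2_def)
  have ig1: "path_image g1 = G" and ig2: "path_image g2 = G2"
    and ih1: "path_image h1 = A" and ih2: "path_image h2 = A2"
    using t0 s0 by (auto simp: g1_def g2_def h1_def h2_def G_def G2_def A_def A2_def path_image_subpath)
  have se: "pathstart g1 = a" "pathfinish g1 = b" "pathstart g2 = b" "pathfinish g2 = a"
     "pathstart h1 = a" "pathfinish h1 = b" "pathstart h2 = b" "pathfinish h2 = a"
    by (auto simp: g1_def g2_def h1_def h2_def ga gb g10 ha hb h10)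
  have CG: "C = G \<union> G2"
  proof -
    have "{0..1::real} = {0..t0} \<union> {t0..1}" using t0 by auto
    then show ?thesis using g(3) by (auto simp: path_image_def G_def G2_def)
  qed
  have SA: "sphere c r = A \<union> A2"
  proof -
    have "{0..1::real} = {0..s0} \<union> {s0..1}" using s0 by auto
    then show ?thesis using h(3) by (auto simp: path_image_def A_def A2_def)
  qed
  have ab_s: "a \<in> sphere c r" "b \<in> sphere c r"
    using h(3) ha hb s0 unfolding path_image_def by force+
  have aG: "a \<in> G" "b \<in> G" using ga gb t0 by (auto simp: G_def)
  have Acb: "A \<subseteq> cball c r" using SA sphere_cball by blast
  have GA: "G \<inter> A \<subseteq> {a, b}"
    using Gcap Acb unfolding G_def by blast
  have Gball: "G \<inter> ball c r = {}"
    using Gcap ab_s by (auto simp: G_def)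
  have ginj: "g x \<noteq> g y" if "x \<in> {0..1}" "y \<in> {0..1}" "x \<noteq> y" "0 < x" "x < 1" for x y
  proof
    assume "g x = g y"
    then have "{x, y} = {0, 1}" using simple_path_inj[OF g(1), of x y] that by auto
    then have "x \<in> {0, 1}" by (metis insertI1)
    then show False using that by auto
  qed
  have hinj: "h x \<noteq> h y" if "x \<in> {0..1}" "y \<in> {0..1}" "x \<noteq> y" "0 < x" "x < 1" for x y
  proof
    assume "h x = h y"
    then have "{x, y} = {0, 1}" using simple_path_inj[OF h(1), of x y] that by auto
    then have "x \<in> {0, 1}" by (metis insertI1)
    then show False using that by auto
  qed
  define j where "j = g1 +++ reversepath h1"
  have arc1: "arc g1" unfolding g1_def using ab ga gb t0i by (intro arc_simple_path_subpath g(1)) auto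
  have arc2: "arc (reversepath h1)" unfolding h1_def using ab ha hb s0i
    by (intro arc_reversepath arc_simple_path_subpath h(1)) auto
  have sj: "simple_path j" unfolding j_def
    using GA ig1 ih1 se by (intro simple_path_join_loop arc1 arc2) auto
  have cj: "pathfinish j = pathstart j" using se by (simp add: j_def)
  have pj: "path j" using sj simple_path_imp_path by auto
  have ij: "path_image j = G \<union> A" using se ig1 ih1 by (simp add: j_def path_image_join)
  define R where "R = inside (G \<union> A)"
  have JIO: "inside(path_image j) \<noteq> {} \<and> open(inside(path_image j)) \<and> connected(inside(path_image j)) \<and>
          outside(path_image j) \<noteq> {} \<and> open(outside(path_image j)) \<and> connected(outside(path_image j)) \<and>
          bounded(inside(path_image j)) \<and> \<not> bounded(outside(path_image j)) \<and>
          inside(path_image j) \<inter> outside(path_image j) = {} \<and>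
          inside(path_image j) \<union> outside(path_image j) = - path_image j \<and>
          frontier(inside(path_image j)) = path_image j \<and> frontier(outside(path_image j)) = path_image j"
    by (rule Jordan_inside_outside[OF sj cj])
  have Rne: "R \<noteq> {}" and Ropen: "open R" and Rbd: "bounded R" and Rfr: "frontier R = G \<union> A"
    using JIO ij by (auto simp: R_def)
  have RJ: "R \<inter> (G \<union> A) = {}" by (simp add: R_def)
  have Rball: "R \<inter> ball c r = {}" using wp by (auto simp: R_def G_def A_def)
  have outj: "winding_number j z = 0" if "z \<notin> R" "z \<notin> G \<union> A" for z
  proof -
    have "z \<in> - (G \<union> A)" using that by auto
    then have "z \<in> outside (G \<union> A)" using that(1) inside_Un_outside[of "G \<union> A"] unfolding R_def by blast
    then have "z \<in> outside (path_image j)" using ij by simp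
    then show ?thesis using winding_number_zero_in_outside[OF pj cj] by blast
  qed
  have inR: "z \<in> R" if "winding_number j z \<noteq> 0" "z \<notin> G \<union> A" for z
  proof (rule ccontr)
    assume "z \<notin> R" then show False using outj that by auto
  qed
  define L1 where "L1 = g2 +++ h1"
  define L2 where "L2 = g1 +++ h2"
  have pL1: "path L1" and cL1: "pathfinish L1 = pathstart L1" and iL1: "path_image L1 = G2 \<union> A"
    using pg2 ph1 se ig2 ih1 by (auto simp: L1_def path_image_join)
  have pL2: "path L2" and cL2: "pathfinish L2 = pathstart L2" and iL2: "path_image L2 = G \<union> A2"
    using pg1 ph2 se ig1 ih2 by (auto simp: L2_def path_image_join)
  have WD1: "winding_number g z = winding_number j z + winding_number L1 z"
    if "z \<notin> C" "z \<notin> A" for z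
  proof -
    have zG: "z \<notin> G" "z \<notin> G2" using that CG by auto
    have "winding_number g z = winding_number g1 z + winding_number g2 z"
      using winding_number_subpath_combine[OF pg, of z 0 t0 1] that g(3) t0i
      by (simp add: g1_def g2_def)
    moreover have "winding_number j z = winding_number g1 z - winding_number h1 z"
      unfolding j_def using winding_number_join[of g1 z "reversepath h1"] winding_number_reversepath[of h1 z]
        pg1 ph1 zG that ig1 ih1 se by simp
    moreover have "winding_number L1 z = winding_number g2 z + winding_number h1 z"
      unfolding L1_def using winding_number_join[of g2 z h1] pg2 ph1 zG that ig2 ih1 se by simp
    ultimately show ?thesis by simp
  qed
  have WD2: "winding_number j z + winding_number h z = winding_number L2 z"
    if "z \<notin> G" "z \<notin> sphere c r" for z
  proof -
    have zA: "z \<notin> A" "z \<notin> A2" using that SA by auto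
    have "winding_number h z = winding_number h1 z + winding_number h2 z"
      using winding_number_subpath_combine[OF ph, of z 0 s0 1] that h(3) s0i
      by (simp add: h1_def h2_def)
    moreover have "winding_number j z = winding_number g1 z - winding_number h1 z"
      unfolding j_def using winding_number_join[of g1 z "reversepath h1"] winding_number_reversepath[of h1 z]
        pg1 ph1 zA that ig1 ih1 se by simp
    moreover have "winding_number L2 z = winding_number g1 z + winding_number h2 z"
      unfolding L2_def using winding_number_join[of g1 z h2] pg1 ph2 zA that ig1 ih2 se by simp
    ultimately show ?thesis by simp
  qed
  have hw0: "winding_number h z = 0" if "r < norm (z - c)" for z
  proof (rule winding_number_zero_outside[OF ph convex_cball h(2)])
    show "z \<notin> cball c r" using that by (simp add: dist_norm norm_minus_commute)
    show "path_image h \<subseteq> cball c r" using h(3) sphere_cball by blast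
  qed
  have Aside: "\<exists>\<delta>>0. \<forall>z. norm (z - y) < \<delta> \<and> r < norm (z - c) \<longrightarrow> z \<in> R \<and> winding_number j z = 1"
    if yA: "y \<in> A" and ya: "y \<noteq> a" and yb: "y \<noteq> b" for y
  proof -
    obtain \<sigma> where \<sigma>: "\<sigma> \<in> {0..s0}" "y = h \<sigma>" using yA by (auto simp: A_def)
    have \<sigma>0: "0 < \<sigma>" using \<sigma> ya ha by (cases "\<sigma> = 0") auto
    have \<sigma>1: "\<sigma> < s0" using \<sigma> yb hb by (cases "\<sigma> = s0") auto
    have yA2: "y \<notin> A2"
    proof
      assume "y \<in> A2"
      then obtain \<tau> where "\<tau> \<in> {s0..1}" "y = h \<tau>" by (auto simp: A2_def)
      then show False using hinj[of \<sigma> \<tau>] \<sigma> \<sigma>0 \<sigma>1 s0 by auto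
    qed
    have ysph: "y \<in> sphere c r" using yA SA by auto
    have yG: "y \<notin> G" using ysph GA yA ya yb by auto
    have cl: "closed (G \<union> A2)" using iL2 pL2 by (metis closed_path_image)
    obtain \<delta> where \<delta>: "\<delta> > 0" "ball y \<delta> \<subseteq> - (G \<union> A2)"
    proof -
      have "y \<in> - (G \<union> A2)" using yG yA2 by blast
      then show ?thesis using that open_Compl[OF cl] unfolding open_contains_ball by blast
    qed
    have "winding_number L2 constant_on ball y \<delta>"
      using winding_number_constant[OF pL2 cL2, of "ball y \<delta>"] \<delta> iL2 by auto
    then obtain k where k: "\<And>z. z \<in> ball y \<delta> \<Longrightarrow> winding_number L2 z = k"
      unfolding constant_on_def by blast
    define s where "s = min (1/2) (\<delta> / (2*r))"
    have s: "0 < s" "s < 1" "s * r < \<delta>" using \<delta> r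
      by (auto simp: s_def min_def field_simps)
    define p1 where "p1 = y + of_real s * (c - y)"
    have yc: "norm (y - c) = r" using ysph by (simp add: dist_norm norm_minus_commute)
    have "p1 - y = of_real s * (c - y)" by (simp add: p1_def)
    then have d1: "norm (p1 - y) = s * r" using s yc by (simp add: norm_mult norm_minus_commute)
    have "p1 - c = of_real (1 - s) * (y - c)" by (simp add: p1_def algebra_simps)
    then have "norm (p1 - c) = \<bar>1 - s\<bar> * norm (y - c)" by (simp only: norm_mult norm_of_real)
    then have d2: "norm (p1 - c) = (1 - s) * r" using s yc by simp
    have p1b: "p1 \<in> ball c r" using d2 s r by (simp add: dist_norm norm_minus_commute)
    have p1d: "p1 \<in> ball y \<delta>" using d1 s by (simp add: dist_norm norm_minus_commute)
    have p1G: "p1 \<notin> G" using p1b Gball by auto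
    have p1s: "p1 \<notin> sphere c r" using p1b by auto
    have "winding_number h p1 = 1" using hw p1b by auto
    moreover have "winding_number j p1 = 0"
    proof -
      have "p1 \<notin> R" using p1b Rball by blast
      moreover have "p1 \<notin> G \<union> A" using p1G p1s SA by blast
      ultimately show ?thesis using outj by blast
    qed
    ultimately have "k = 1" using WD2[OF p1G p1s] k[OF p1d] by simp
    show ?thesis
    proof (intro exI[of _ \<delta>] conjI allI impI \<delta>)
      fix z assume z: "norm (z - y) < \<delta> \<and> r < norm (z - c)"
      then have zb: "z \<in> ball y \<delta>" by (simp add: dist_norm norm_minus_commute)
      have zG: "z \<notin> G" using zb \<delta> by auto
      have zs: "z \<notin> sphere c r" using z by (auto simp: dist_norm norm_minus_commute)
      have "winding_number j z = 1" using WD2[OF zG zs] hw0[of z] z k[OF zb] \<open>k = 1\<close> by simp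
      moreover have "z \<notin> G \<union> A" using zG zs SA by auto
      ultimately show "z \<in> R" "winding_number j z = 1" using inR[of z] by auto
    qed
  qed
  define ym where "ym = h (s0/2)"
  have ymA: "ym \<in> A" using s0 by (auto simp: ym_def A_def)
  have yma: "ym \<noteq> a" using hinj[of "s0/2" 0] s0 ha by (auto simp: ym_def)
  have ymb: "ym \<noteq> b" using hinj[of "s0/2" s0] s0 hb by (auto simp: ym_def)
  obtain \<delta>m where \<delta>m: "\<delta>m > 0" "\<And>z. norm (z - ym) < \<delta>m \<and> r < norm (z - c) \<Longrightarrow> z \<in> R \<and> winding_number j z = 1"
    using Aside[OF ymA yma ymb] by blast
  have ymc: "norm (ym - c) = r" using ymA SA by (auto simp: dist_norm norm_minus_commute)
  define z0 where "z0 = ym + of_real (\<delta>m / (2*r)) * (ym - c)"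
  have "z0 - ym = of_real (\<delta>m / (2*r)) * (ym - c)" by (simp add: z0_def)
  then have "norm (z0 - ym) = \<bar>\<delta>m / (2*r)\<bar> * norm (ym - c)" by (simp only: norm_mult norm_of_real)
  then have z0ym: "norm (z0 - ym) = \<delta>m / 2" using ymc r \<delta>m by simp
  have "z0 - c = of_real (1 + \<delta>m / (2*r)) * (ym - c)" by (simp add: z0_def algebra_simps)
  then have "norm (z0 - c) = \<bar>1 + \<delta>m / (2*r)\<bar> * norm (ym - c)" by (simp only: norm_mult norm_of_real)
  then have "norm (z0 - c) = (1 + \<delta>m / (2*r)) * r" using ymc r \<delta>m by simp
  also have "\<dots> = r + \<delta>m / 2" using r by (simp add: distrib_right)
  finally have "norm (z0 - c) = r + \<delta>m / 2" .
  with z0ym have z0: "z0 \<in> R" "winding_number j z0 = 1" "r < norm (z0 - c)"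
    using \<delta>m by auto
  have jR: "winding_number j z = 1" if "z \<in> R" for z
  proof (rule simple_closed_path_winding_number_inside[OF sj])
    assume "\<And>z. z \<in> inside (path_image j) \<Longrightarrow> winding_number j z = 1"
    then show ?thesis using that ij by (simp add: R_def)
  next
    assume "\<And>z. z \<in> inside (path_image j) \<Longrightarrow> winding_number j z = -1"
    then have "winding_number j z0 = -1" using z0 ij by (simp add: R_def)
    then show ?thesis using z0 by simp
  qed
  \<comment> \<open>maxima of distance functions on the closure of R lie on G\<close>
  define K where "K = closure R"
  have Kc: "compact K" using Rbd by (simp add: K_def compact_closure)
  have Kne: "K \<noteq> {}" using Rne by (simp add: K_def)
  have RK: "R \<subseteq> K" by (simp add: K_def closure_subset)
  have KRJ: "K = R \<union> (G \<union> A)"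
    using Rfr Ropen by (simp add: K_def closure_Un_frontier interior_open)
  have Mx: "x \<in> G" if xK: "x \<in> K" and xm: "\<forall>z\<in>K. norm (z - p) \<le> norm (x - p)" for x p
  proof -
    have "x \<notin> R"
    proof
      assume "x \<in> R"
      then obtain e where e: "e > 0" "ball x e \<subseteq> R" using Ropen open_contains_ball by blast
      obtain z where z: "norm (z - x) < e" "norm (x - p) < norm (z - p)" using push_away[OF e(1)] by blast
      then have "z \<in> R" using e by (auto simp: dist_norm norm_minus_commute)
      then show False using xm z RK by force
    qed
    moreover have "x \<notin> A - {a, b}"
    proof
      assume "x \<in> A - {a, b}"
      then obtain \<delta> where \<delta>: "\<delta> > 0" "\<And>z. norm (z - x) < \<delta> \<and> r < norm (z - c) \<Longrightarrow> z \<in> R"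
        using Aside[of x] by blast
      have xc: "norm (x - c) = r" using \<open>x \<in> A - {a, b}\<close> SA by (auto simp: dist_norm norm_minus_commute)
      obtain z where z: "norm (z - x) < \<delta>" "r < norm (z - c)" "norm (x - p) < norm (z - p)"
        using tangent_escape[OF xc r(1) \<delta>(1)] by blast
      then have "z \<in> R" using \<delta> by blast
      then show False using xm z RK by force
    qed
    ultimately show ?thesis using xK KRJ aG by blast
  qed
  define pt where "pt t = c + of_real t * (c0 - c)" for t :: real
  define M where "M t = (SUP z\<in>K. norm (z - pt t))" for t
  have Matt: "\<exists>x\<in>K. norm (x - pt t) = M t \<and> (\<forall>z\<in>K. norm (z - pt t) \<le> M t)" for t
  proof -
    have "continuous_on K (\<lambda>z. norm (z - pt t))" by (intro continuous_intros)
    then obtain x where x: "x \<in> K" "\<forall>z\<in>K. norm (z - pt t) \<le> norm (x - pt t)"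
      using continuous_attains_sup[OF Kc Kne] by blast
    then have "M t = norm (x - pt t)" unfolding M_def by (intro cSup_eq_maximum) auto
    then show ?thesis using x by auto
  qed
  have Mle: "norm (z - pt t) \<le> M t" if "z \<in> K" for z t using Matt that by blast
  have Mlip: "M t \<le> M t' + \<bar>t - t'\<bar> * norm (c0 - c)" for t t'
  proof -
    obtain x where x: "x \<in> K" "norm (x - pt t) = M t" using Matt by blast
    have "pt t' - pt t = of_real (t' - t) * (c0 - c)" by (simp add: pt_def algebra_simps)
    then have "norm (pt t' - pt t) = \<bar>t' - t\<bar> * norm (c0 - c)" by (simp only: norm_mult norm_of_real)
    then have "norm (pt t' - pt t) = \<bar>t - t'\<bar> * norm (c0 - c)" by (simp add: abs_minus_commute)
    moreover have "norm (x - pt t) \<le> norm (x - pt t') + norm (pt t' - pt t)"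
      using norm_triangle_ineq[of "x - pt t'" "pt t' - pt t"] by simp
    ultimately show ?thesis using x Mle[of x t'] by simp
  qed
  have Mcont: "continuous_on {0..1} M"
  proof (rule lipschitz_on_continuous_on)
    show "(norm (c0 - c))-lipschitz_on {0..1} M"
    proof (rule lipschitz_onI)
      fix x y :: real
      show "dist (M x) (M y) \<le> norm (c0 - c) * dist x y"
        using Mlip[of x y] Mlip[of y x] by (simp add: dist_real_def abs_le_iff abs_minus_commute mult.commute)
    qed simp
  qed
  have acont: "continuous_on {0..1} (\<lambda>t. norm (q - pt t))" for q
    unfolding pt_def by (intro continuous_intros)
  have M1: "M 1 < 1"
  proof -
    obtain x where x: "x \<in> K" "norm (x - pt 1) = M 1" "\<forall>z\<in>K. norm (z - pt 1) \<le> M 1" using Matt by blast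
    then have "x \<in> G" using Mx[of x "pt 1"] by auto
    then have "norm (x - c0) < 1" using Gsub by (auto simp: G_def dist_norm norm_minus_commute)
    then show ?thesis using x by (simp add: pt_def)
  qed
  have M0: "r < M 0" using z0 Mle[of z0 0] RK by (force simp: pt_def)
  have pt0: "pt 0 = c" by (simp add: pt_def)
  have qlt: "norm (q - pt t) < 1" if "q \<in> G" "q \<in> sphere c r" "0 < t" "t \<le> 1" for q t
  proof -
    have qc: "norm (q - c) = r" using that by (simp add: dist_norm norm_minus_commute)
    have "q \<in> ball c0 1" using that(1) Gsub by (auto simp: G_def)
    then have qc0: "norm (q - c0) < 1" by (simp add: dist_norm norm_minus_commute)
    have "q - pt t = of_real (1 - t) * (q - c) + of_real t * (q - c0)" by (simp add: pt_def algebra_simps)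
    then have "norm (q - pt t) \<le> norm (of_real (1 - t) * (q - c)) + norm (of_real t * (q - c0))"
      by (metis norm_triangle_ineq)
    also have "\<dots> = \<bar>1 - t\<bar> * norm (q - c) + \<bar>t\<bar> * norm (q - c0)" by (simp only: norm_mult norm_of_real)
    also have "\<dots> = (1 - t) * r + t * norm (q - c0)" using that qc by simp
    also have "\<dots> < (1 - t) * 1 + t * 1"
    proof -
      have "(1 - t) * r \<le> (1 - t) * 1" using that r by (intro mult_left_mono) auto
      moreover have "t * norm (q - c0) < t * 1" using that qc0 by simp
      ultimately show ?thesis by linarith
    qed
    finally show ?thesis by simp
  qed
  have tex: "\<exists>t\<in>{0..1}. M t < 1 \<and> norm (a - pt t) < M t \<and> norm (b - pt t) < M t"
  proof (cases "M 0 < 1")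
    case True
    then show ?thesis using M0 ab_s pt0 by (intro bexI[of _ 0]) (auto simp: dist_norm norm_minus_commute)
  next
    case False
    define S where "S = {t \<in> {0..1}. (\<lambda>_. 1) t \<le> M t}"
    have Sc: "closed S" unfolding S_def by (intro continuous_on_closed_Collect_le Mcont) auto
    have "bounded S" by (rule bounded_subset[of "{0..1::real}"]) (auto simp: S_def)
    then have "compact S" using Sc by (simp add: compact_eq_bounded_closed)
    moreover have "0 \<in> S" using False by (simp add: S_def)
    ultimately obtain t1 where t1: "t1 \<in> S" "\<forall>t\<in>S. t \<le> t1"
      using continuous_attains_sup[of S "\<lambda>t. t"] by (auto intro: continuous_intros)
    have t1i: "0 \<le> t1" "t1 < 1" using t1 M1 by (auto simp: S_def)
    have Mt1: "1 \<le> M t1" using t1 by (simp add: S_def)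
    have pos: "norm (q - pt t1) < M t1" if "q \<in> G" "q \<in> sphere c r" for q
    proof (cases "t1 = 0")
      case True then show ?thesis using M0 that pt0 by (simp add: dist_norm norm_minus_commute)
    next
      case False then show ?thesis using qlt[OF that, of t1] t1i Mt1 by simp
    qed
    define \<Phi> where "\<Phi> t = min (M t - norm (a - pt t)) (M t - norm (b - pt t))" for t
    have \<Phi>c: "continuous_on {0..1} \<Phi>" unfolding \<Phi>_def
      by (intro continuous_on_min continuous_on_diff Mcont acont)
    have \<Phi>t1: "0 < \<Phi> t1" using pos[of a] pos[of b] aG ab_s by (simp add: \<Phi>_def)
    have t1I: "t1 \<in> {0..1}" using t1i by simp
    obtain d where d: "d > 0" "\<And>t. t \<in> {0..1} \<Longrightarrow> dist t t1 < d \<Longrightarrow> dist (\<Phi> t) (\<Phi> t1) < \<Phi> t1"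
      using \<Phi>c \<Phi>t1 t1I unfolding continuous_on_iff by blast
    define t where "t = t1 + min (d/2) ((1 - t1)/2)"
    have m1: "0 < min (d/2) ((1 - t1)/2)" using d t1i by simp
    have m2: "min (d/2) ((1 - t1)/2) \<le> d/2" by (rule min.cobounded1)
    have m3: "min (d/2) ((1 - t1)/2) \<le> (1 - t1)/2" by (rule min.cobounded2)
    note m = m1 m2 m3
    have tI: "t \<in> {0..1}" "t1 < t" using t1i m unfolding t_def by auto
    have "dist t t1 < d" using d m unfolding t_def dist_real_def by auto
    then have "0 < \<Phi> t" using d tI by (force simp: dist_real_def)
    moreover have "t \<notin> S" using t1 tI by force
    then have "M t < 1" using tI by (auto simp: S_def)
    ultimately show ?thesis using tI by (intro bexI[of _ t]) (auto simp: \<Phi>_def)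
  qed
  then obtain t where t: "t \<in> {0..1}" "M t < 1" "norm (a - pt t) < M t" "norm (b - pt t) < M t"
    by blast
  obtain x where x: "x \<in> K" "norm (x - pt t) = M t" "\<forall>z\<in>K. norm (z - pt t) \<le> M t" using Matt by blast
  have xG: "x \<in> G" using Mx[of x "pt t"] x by auto
  have xab: "x \<noteq> a" "x \<noteq> b" using x t by auto
  obtain \<tau> where \<tau>: "\<tau> \<in> {0..t0}" "x = g \<tau>" using xG by (auto simp: G_def)
  have \<tau>0: "0 < \<tau>" using \<tau> xab ga by (cases "\<tau> = 0") auto
  have \<tau>1: "\<tau> < t0" using \<tau> xab gb by (cases "\<tau> = t0") auto
  have xG2: "x \<notin> G2"
  proof
    assume "x \<in> G2"
    then obtain \<sigma> where "\<sigma> \<in> {t0..1}" "x = g \<sigma>" by (auto simp: G2_def)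
    then show False using ginj[of \<tau> \<sigma>] \<tau> \<tau>0 \<tau>1 t0 by auto
  qed
  have xA: "x \<notin> A" using xG GA xab by auto
  have xC: "x \<in> C" using xG CG by auto
  obtain u \<epsilon> where u: "x \<in> sphere u 1" "\<epsilon> > 0" "ball x \<epsilon> \<inter> ball u 1 \<subseteq> inside C"
    using bcc xC unfolding bounded_convex_curvature_def by blast
  have cl1: "closed (G2 \<union> A)" using iL1 pL1 by (metis closed_path_image)
  obtain \<delta>0 where \<delta>0: "\<delta>0 > 0" "ball x \<delta>0 \<subseteq> - (G2 \<union> A)"
  proof -
    have "x \<in> - (G2 \<union> A)" using xG2 xA by blast
    then show ?thesis using that open_Compl[OF cl1] unfolding open_contains_ball by blast
  qed
  define \<delta> where "\<delta> = min \<epsilon> \<delta>0"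
  have \<delta>: "\<delta> > 0" "ball x \<delta> \<subseteq> ball x \<epsilon>" "ball x \<delta> \<subseteq> ball x \<delta>0"
    using u \<delta>0 by (auto simp: \<delta>_def)
  have "ball x \<delta> \<inter> path_image L1 = {}" using \<delta> \<delta>0 iL1 by blast
  then have "winding_number L1 constant_on ball x \<delta>"
    using winding_number_constant[OF pL1 cL1, of "ball x \<delta>"] by auto
  then obtain k where k: "\<And>z. z \<in> ball x \<delta> \<Longrightarrow> winding_number L1 z = k"
    unfolding constant_on_def by blast
  have gw01: "winding_number g z \<in> {-1, 0, 1}" if "z \<notin> C" for z
    using simple_closed_path_winding_number_cases[OF g(1) g(2)] that g(3) by auto
  have VR: "v \<in> R" if v: "v \<in> ball x \<delta>" "v \<in> ball u 1" for v
  proof -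
    have vC: "v \<in> inside C" using u(3) v \<delta> by blast
    then have vnC: "v \<notin> C" using inside_no_overlap by blast
    have vA: "v \<notin> A" using v \<delta> \<delta>0 by blast
    have vJ: "v \<notin> G \<union> A" using vnC vA CG by blast
    show "v \<in> R"
    proof (rule ccontr)
      assume "v \<notin> R"
      then have "winding_number j v = 0" using outj vJ by blast
      moreover have "winding_number g v = 1" using gw vC by blast
      ultimately have "k = 1" using WD1[OF vnC vA] k[OF v(1)] by simp
      have "x \<in> closure R" using xG Rfr frontier_def by (metis UnI1 DiffD1)
      then obtain q where q: "q \<in> R" "dist q x < \<delta>" using \<delta> closure_approachable by blast
      have qb: "q \<in> ball x \<delta>" using q by (simp add: dist_commute)
      have qJ: "q \<notin> G \<union> A" using q RJ by blast
      have qG2: "q \<notin> G2" using qb \<delta> \<delta>0 by blast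
      have qC: "q \<notin> C" using qJ qG2 CG by blast
      have qA: "q \<notin> A" using qJ by blast
      have "winding_number g q = 2" using WD1[OF qC qA] jR[OF q(1)] k[OF qb] \<open>k = 1\<close> by simp
      then show False using gw01[OF qC] by simp
    qed
  qed
  have xu: "norm (x - u) = 1" using u(1) by (simp add: dist_norm norm_minus_commute)
  obtain z where z: "norm (z - x) < \<delta>" "norm (z - u) < 1" "M t < norm (z - pt t)"
    using unit_disk_escape[OF xu x(2) t(2) \<delta>(1)] by blast
  have "z \<in> R" using VR[of z] z by (simp add: dist_norm norm_minus_commute)
  then show False using Mle[of z t] RK z by force
qed

theorem lemma3:
  fixes C :: "complex set" and a b c0 c :: complex and r :: real
  assumes "jordan_curve C"
    and "a \<in> C" and "b \<in> C" and "a \<noteq> b"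
    and "pos_arc C a b \<subseteq> ball c0 1"
    and "0 < r" and "r \<le> 1"
    and "pos_arc C a b \<inter> closure (ball c r) = {a, b}"
    and "winds_positively C c r a b"
  shows "\<not> bounded_convex_curvature C"
proof
  assume bcc: "bounded_convex_curvature C"
  obtain g t0 where g: "pos_param C g" "g 0 = a" "0 < t0" "t0 < 1" "g t0 = b" "pos_arc C a b = g ` {0..t0}"
    using pos_arc_props[OF assms(1-4)] by blast
  have wp: "a \<in> sphere c r" "b \<in> sphere c r"
    "ball c r \<inter> inside (pos_arc C a b \<union> pos_arc (sphere c r) a b) = {}"
    using assms(9) unfolding winds_positively_def by auto
  obtain h s0 where h: "pos_param (sphere c r) h" "h 0 = a" "0 < s0" "s0 < 1" "h s0 = b"
      "pos_arc (sphere c r) a b = h ` {0..s0}"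
    using pos_arc_props[OF jordan_sphere[OF assms(6)] wp(1,2) assms(4)] by blast
  have gp: "simple_path g" "pathfinish g = pathstart g" "path_image g = C" "\<forall>q\<in>inside C. winding_number g q = 1"
    using g(1) unfolding pos_param_def by auto
  have hp: "simple_path h" "pathfinish h = pathstart h" "path_image h = sphere c r"
      "\<forall>q\<in>ball c r. winding_number h q = 1"
    using h(1) inside_sphere_eq[OF assms(6), of c] unfolding pos_param_def by auto
  have Gcap: "g ` {0..t0} \<inter> cball c r = {a, b}" using assms(8) g(6) assms(6) by simp
  show False
    using main_contra[OF gp g(2,3,4,5) hp h(2,3,4,5) assms(4), of c0] assms(5,6,7) g(6) h(6) Gcap wp(3) bcc
    by simp
qed

end
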